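(* Let $G=\mathbb Z\wr\mathbb Z=\langle a\rangle\wr\langle b\rangle$. Then $\mathrm{pw}(G,\{a,b\})\le 3$.
   Context: $a$ generates the first (base) infinite cyclic factor and $b$ the second (acting) infinite cyclic factor of the restricted wreath product. A palindrome in a group generated by $X$ is an element represented by a reduced word in $X^{\pm1}$ reading the same forwards and backwards; $l_{\mathcal P}(g)$ is the minimal number of palindromes whose product is $g$; $\mathrm{pw}(G,X)=\sup_{g\in G}l_{\mathcal P}(g)$. *)

theory Defs
  imports Main "HOL-Library.Extended_Nat"
begin

text \<open>Elements are pairs (f, m): f : int \<Rightarrow> int a finitely supported function
  (the base group, the restricted direct sum of copies of <a> indexed by Z) and
  m \<in> Z (the power of b). Multiplication: b acts on the base by shifting.\<close>

type_synonym wr = "(int \<Rightarrow> int) \<times> int"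

definition wr_carrier :: "wr set" where
  "wr_carrier = {(f, m). finite {i. f i \<noteq> 0}}"

definition wr_mult :: "wr \<Rightarrow> wr \<Rightarrow> wr" where
  "wr_mult x y = (\<lambda>i. fst x i + fst y (i - snd x), snd x + snd y)"

definition wr_one :: wr where
  "wr_one = (\<lambda>_. 0, 0)"

definition wr_inv :: "wr \<Rightarrow> wr" where
  "wr_inv x = (\<lambda>i. - fst x (i + snd x), - snd x)"

definition wr_a :: wr where
  "wr_a = ((\<lambda>i. if i = 0 then 1 else 0), 0)"

definition wr_b :: wr where
  "wr_b = ((\<lambda>_. 0), 1)"

datatype gen = GA | GB

text \<open>A letter is a generator together with an exponent sign (True = +1, False = -1).\<close>
type_synonym letter = "gen \<times> bool"

definition letter_inv :: "letter \<Rightarrow> letter" where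
  "letter_inv l = (fst l, \<not> snd l)"

definition gen_elem :: "gen \<Rightarrow> wr" where
  "gen_elem g = (case g of GA \<Rightarrow> wr_a | GB \<Rightarrow> wr_b)"

definition letter_elem :: "letter \<Rightarrow> wr" where
  "letter_elem l = (if snd l then gen_elem (fst l) else wr_inv (gen_elem (fst l)))"

definition eval_word :: "letter list \<Rightarrow> wr" where
  "eval_word w = foldr (\<lambda>l acc. wr_mult (letter_elem l) acc) w wr_one"

definition reduced :: "letter list \<Rightarrow> bool" where
  "reduced w = successively (\<lambda>x y. y \<noteq> letter_inv x) w"

definition palindrome :: "wr \<Rightarrow> bool" where
  "palindrome g = (\<exists>w. reduced w \<and> rev w = w \<and> eval_word w = g)"

definition wr_prod :: "wr list \<Rightarrow> wr" where
  "wr_prod ps = foldr wr_mult ps wr_one"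

definition pal_length :: "wr \<Rightarrow> enat" where
  "pal_length g = Inf {enat (length ps) | ps. (\<forall>p\<in>set ps. palindrome p) \<and> wr_prod ps = g}"

definition pal_width :: enat where
  "pal_width = Sup (pal_length ` wr_carrier)"

end

theory Submission imports Defs begin

lemma wr_mult_assoc: "wr_mult (wr_mult x y) z = wr_mult x (wr_mult y z)"
  by (auto simp: wr_mult_def algebra_simps)

lemma wr_mult_one_left[simp]: "wr_mult wr_one x = x"
  by (simp add: wr_mult_def wr_one_def)

lemma wr_mult_one_right[simp]: "wr_mult x wr_one = x"
  by (simp add: wr_mult_def wr_one_def)

lemma eval_Cons: "eval_word (x # ys) = wr_mult (letter_elem x) (eval_word ys)"
  by (simp add: eval_word_def)

lemma eval_append: "eval_word (xs @ ys) = wr_mult (eval_word xs) (eval_word ys)"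
proof (induction xs)
  case Nil
  then show ?case by (simp add: eval_word_def)
next
  case (Cons x xs)
  have "eval_word ((x # xs) @ ys) = wr_mult (letter_elem x) (eval_word (xs @ ys))"
    by (simp only: append_Cons eval_Cons)
  also have "\<dots> = wr_mult (eval_word (x # xs)) (eval_word ys)"
    by (simp only: Cons eval_Cons wr_mult_assoc)
  finally show ?case .
qed

lemma eval_Nil[simp]: "eval_word [] = wr_one"
  by (simp add: eval_word_def)

lemma eval_repA: "eval_word (replicate n (GA, s)) =
   ((\<lambda>i. if i = 0 then (if s then int n else - int n) else 0), 0)"
  by (induction n) (auto simp: eval_Cons letter_elem_def gen_elem_def wr_a_def wr_inv_def
      wr_mult_def wr_one_def fun_eq_iff)

lemma eval_repB: "eval_word (replicate n (GB, s)) =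
   ((\<lambda>i. 0), (if s then int n else - int n))"
  by (induction n) (auto simp: eval_Cons letter_elem_def gen_elem_def wr_b_def wr_inv_def
      wr_mult_def wr_one_def fun_eq_iff)

definition apow :: "int \<Rightarrow> letter list" where
  "apow e = replicate (nat \<bar>e\<bar>) (GA, 0 \<le> e)"

lemma eval_apow: "eval_word (apow e) = ((\<lambda>i. if i = 0 then e else 0), 0)"
  by (auto simp: apow_def eval_repA)

primrec mw :: "(int \<Rightarrow> int) \<Rightarrow> nat \<Rightarrow> letter list" where
  "mw g 0 = apow (g 0)"
| "mw g (Suc n) = apow (g 0) @ (GB, True) # mw (\<lambda>i. g (i + 1)) n"

lemma eval_mw: "eval_word (mw g L) = ((\<lambda>i. if 0 \<le> i \<and> i \<le> int L then g i else 0), int L)"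
proof (induction L arbitrary: g)
  case 0
  then show ?case by (auto simp: eval_apow fun_eq_iff)
next
  case (Suc n)
  show ?case
  proof -
    have e: "eval_word (mw g (Suc n)) = wr_mult (eval_word (apow (g 0))) (wr_mult wr_b (eval_word (mw (\<lambda>i. g (i + 1)) n)))"
      by (simp add: eval_append eval_Cons letter_elem_def gen_elem_def)
    show ?thesis unfolding e Suc eval_apow
      by (simp add: wr_b_def wr_mult_def fun_eq_iff)
  qed
qed

lemma mw_snoc: "mw g (Suc n) = mw g n @ (GB, True) # apow (g (int (Suc n)))"
proof (induction n arbitrary: g)
  case 0
  then show ?case by simp
next
  case (Suc n)
  have "mw g (Suc (Suc n)) = apow (g 0) @ (GB, True) # mw (\<lambda>i. g (i + 1)) (Suc n)" by simp
  also have "\<dots> = apow (g 0) @ (GB, True) # mw (\<lambda>i. g (i + 1)) n @ (GB, True) # apow (g (int (Suc (Suc n))))"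
    using Suc[of "\<lambda>i. g (i + 1)"] by (simp add: add.commute)
  finally show ?case by simp
qed

lemma mw_cong: "(\<And>i. 0 \<le> i \<Longrightarrow> i \<le> int L \<Longrightarrow> g i = g' i) \<Longrightarrow> mw g L = mw g' L"
proof (induction L arbitrary: g g')
  case 0
  then show ?case by simp
next
  case (Suc n)
  have "mw (\<lambda>i. g (i + 1)) n = mw (\<lambda>i. g' (i + 1)) n"
    by (rule Suc.IH) (use Suc.prems in auto)
  then show ?case using Suc.prems[of 0] by simp
qed

lemma rev_apow[simp]: "rev (apow e) = apow e"
  by (simp add: apow_def)

lemma rev_mw: "rev (mw g L) = mw (\<lambda>i. g (int L - i)) L"
proof (induction L arbitrary: g)
  case 0
  then show ?case by simp
next
  case (Suc n)
  have "rev (mw g (Suc n)) = apow (g (int (Suc n))) @ (GB, True) # rev (mw g n)"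
    by (simp only: mw_snoc rev_append) simp
  also have "\<dots> = apow (g (int (Suc n))) @ (GB, True) # mw (\<lambda>i. g (int n - i)) n"
    by (simp add: Suc)
  also have "(\<lambda>i. g (int n - i)) = (\<lambda>i. g (int (Suc n) - (i + 1)))" by auto
  finally show ?case by simp
qed

lemma GBF_notin_mw: "(GB, False) \<notin> set (mw g L)"
  by (induction L arbitrary: g) (auto simp: apow_def)

lemma set_apow: "set (apow e) \<subseteq> {(GA, 0 \<le> e)}"
  by (auto simp: apow_def)

lemma reduced_apow: "reduced (apow e)"
proof -
  have "successively (\<lambda>x y. y \<noteq> letter_inv x) (replicate n (GA, s))" for n s
  proof (induction n)
    case (Suc n)
    then show ?case by (cases n) (simp_all add: letter_inv_def)
  qed simp
  then show ?thesis by (simp add: reduced_def apow_def)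
qed


lemma succ_rep: "successively (\<lambda>x y. y \<noteq> letter_inv x) (replicate n (c, s))"
proof (induction n)
  case (Suc n)
  then show ?case by (cases n) (simp_all add: letter_inv_def)
qed simp

lemma hd_apow: "e \<noteq> 0 \<Longrightarrow> apow e \<noteq> [] \<and> hd (apow e) = (GA, 0 \<le> e)"
  by (simp add: apow_def)

lemma hd_mw: "g 0 \<noteq> 0 \<Longrightarrow> mw g L \<noteq> [] \<and> hd (mw g L) = (GA, 0 \<le> g 0)"
  by (cases L) (simp_all add: hd_apow)

lemma last_mw: assumes "g (int L) \<noteq> 0" shows "mw g L \<noteq> [] \<and> last (mw g L) = (GA, 0 \<le> g (int L))"
proof -
  have "rev (mw g L) \<noteq> [] \<and> hd (rev (mw g L)) = (GA, 0 \<le> g (int L))"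
    unfolding rev_mw using hd_mw[of "\<lambda>i. g (int L - i)" L] assms by simp
  then show ?thesis by (simp add: hd_rev)
qed

lemma reduced_mw: "reduced (mw g L)"
proof (induction L arbitrary: g)
  case 0
  then show ?case by (simp add: reduced_apow)
next
  case (Suc n)
  define M where "M = mw (\<lambda>i. g (i + 1)) n"
  have sM: "successively (\<lambda>x y. y \<noteq> letter_inv x) M" using Suc[of "\<lambda>i. g (i + 1)"]
    by (simp add: M_def reduced_def)
  have nM: "(GB, False) \<notin> set M" unfolding M_def by (rule GBF_notin_mw)
  have s1: "successively (\<lambda>x y. y \<noteq> letter_inv x) ((GB, True) # M)"
    using sM nM by (cases M) (auto simp: successively_Cons letter_inv_def)
  have s0: "successively (\<lambda>x y. y \<noteq> letter_inv x) (apow (g 0))"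
    using reduced_apow by (simp add: reduced_def)
  have j: "apow (g 0) = [] \<or> (GB, True) \<noteq> letter_inv (last (apow (g 0)))"
    using set_apow[of "g 0"] by (cases "apow (g 0) = []") (auto simp: letter_inv_def dest!: last_in_set)
  show ?case using s0 s1 j
    by (simp add: reduced_def successively_append_iff M_def[symmetric])
qed

definition bneg :: "nat \<Rightarrow> letter list" where "bneg N = replicate N (GB, False)"

lemma eval_bneg: "eval_word (bneg N) = ((\<lambda>i. 0), - int N)"
  by (simp add: bneg_def eval_repB)

lemma pal_word:
  fixes h :: "int \<Rightarrow> int" and T :: int and N :: nat
  assumes T: "T \<ge> 0"
    and sym: "\<And>i. h (T - i) = h i"
    and supp: "\<And>i. h i \<noteq> 0 \<Longrightarrow> - int N \<le> i \<and> i \<le> T + int N"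
    and ends: "N = 0 \<or> h (- int N) \<noteq> 0"
  shows "palindrome (h, T)"
proof -
  define L where "L = nat T + 2 * N"
  define g where "g = (\<lambda>i. h (i - int N))"
  define M where "M = mw g L"
  define W where "W = bneg N @ M @ bneg N"
  have Lint: "int L = T + 2 * int N" using T by (simp add: L_def)
  have revM: "rev M = M"
    unfolding M_def rev_mw
  proof (rule mw_cong)
    fix i assume "0 \<le> i" "i \<le> int L"
    have "g (int L - i) = h (T + int N - i)" by (simp add: g_def Lint algebra_simps)
    also have "\<dots> = h (T - (T + int N - i))" by (rule sym[symmetric])
    also have "\<dots> = g i" by (simp add: g_def)
    finally show "g (int L - i) = g i" .
  qed
  have revW: "rev W = W" by (simp add: W_def revM bneg_def)
  have redM: "successively (\<lambda>x y. y \<noteq> letter_inv x) M"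
    using reduced_mw by (simp add: M_def reduced_def)
  have redW: "reduced W"
  proof (cases "N = 0")
    case True
    then show ?thesis using redM by (simp add: W_def bneg_def reduced_def)
  next
    case False
    then have h0: "h (- int N) \<noteq> 0" using ends by simp
    have hL: "h (T + int N) \<noteq> 0" using h0 sym[of "- int N"] by simp
    have g0: "g 0 \<noteq> 0" using h0 by (simp add: g_def)
    have gL: "g (int L) \<noteq> 0" using hL by (simp add: g_def Lint algebra_simps)
    have hdM: "M \<noteq> [] \<and> hd M = (GA, 0 \<le> g 0)" using hd_mw[of g L, OF g0] by (simp add: M_def)
    have lastM: "last M = (GA, 0 \<le> g (int L))" using last_mw[of g L, OF gL] by (simp add: M_def)
    have sb: "successively (\<lambda>x y. y \<noteq> letter_inv x) (bneg N)"
      by (simp add: bneg_def succ_rep)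
    have lb: "last (bneg N) = (GB, False)" "hd (bneg N) = (GB, False)" "bneg N \<noteq> []"
      using False by (simp_all add: bneg_def)
    show ?thesis using sb redM hdM lastM lb
      by (simp add: W_def reduced_def successively_append_iff letter_inv_def)
  qed
  have evW: "eval_word W = (h, T)"
  proof -
    have "eval_word W = wr_mult ((\<lambda>i. 0), - int N)
       (wr_mult ((\<lambda>i. if 0 \<le> i \<and> i \<le> int L then g i else 0), int L) ((\<lambda>i. 0), - int N))"
      by (simp add: W_def eval_append eval_bneg M_def eval_mw)
    also have "\<dots> = ((\<lambda>i. if 0 \<le> i + int N \<and> i + int N \<le> int L then h i else 0), T)"
      by (simp add: wr_mult_def Lint fun_eq_iff g_def)
    also have "\<dots> = (h, T)"
      using supp by (force simp: Lint fun_eq_iff)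
    finally show ?thesis .
  qed
  show ?thesis unfolding palindrome_def using redW revW evW by blast
qed


lemma pal_sym:
  fixes h :: "int \<Rightarrow> int" and T :: int
  assumes T: "T \<ge> 0" and fin: "finite {i. h i \<noteq> 0}" and sym: "\<And>i. h (T - i) = h i"
  shows "palindrome (h, T)"
proof -
  define S where "S = {i. h i \<noteq> 0}"
  define P where "P = (\<lambda>N::nat. \<forall>i. h i \<noteq> 0 \<longrightarrow> - int N \<le> i \<and> i \<le> T + int N)"
  define K where "K = Max (insert 0 (abs ` S))"
  have "\<And>i. i \<in> S \<Longrightarrow> \<bar>i\<bar> \<le> K" unfolding K_def using fin S_def by (intro Max_ge) auto
  then have ex: "P (nat K)" unfolding P_def S_def using T by fastforce
  define N where "N = (LEAST N. P N)"
  have PN: "P N" unfolding N_def using ex by (rule LeastI)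
  have ends: "N = 0 \<or> h (- int N) \<noteq> 0"
  proof (rule ccontr)
    assume c: "\<not> (N = 0 \<or> h (- int N) \<noteq> 0)"
    then have N0: "N > 0" and hz: "h (- int N) = 0" by auto
    have hz2: "h (T + int N) = 0" using hz sym[of "- int N"] by simp
    have "P (N - 1)" unfolding P_def
    proof (intro allI impI)
      fix i assume hi: "h i \<noteq> 0"
      then have "- int N \<le> i \<and> i \<le> T + int N" using PN by (simp add: P_def)
      moreover have "i \<noteq> - int N" "i \<noteq> T + int N" using hi hz hz2 by auto
      ultimately show "- int (N - 1) \<le> i \<and> i \<le> T + int (N - 1)" using N0 by auto
    qed
    moreover have "\<not> P (N - 1)" unfolding N_def by (rule not_less_Least) (use N0 N_def in simp)
    ultimately show False by simp
  qed
  show ?thesis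
    by (rule pal_word[of T h N, OF T sym]) (use PN ends in \<open>auto simp: P_def\<close>)
qed

lemma pal_bpow: "palindrome ((\<lambda>i. 0), k)"
proof -
  define W where "W = replicate (nat \<bar>k\<bar>) (GB, 0 \<le> k)"
  have "eval_word W = ((\<lambda>i. 0), k)" by (simp add: W_def eval_repB)
  moreover have "reduced W" by (simp add: W_def reduced_def succ_rep)
  moreover have "rev W = W" by (simp add: W_def)
  ultimately show ?thesis unfolding palindrome_def by blast
qed

lemma three_pal:
  assumes fin: "finite {i. f i \<noteq> 0}"
  shows "\<exists>ps. length ps = 3 \<and> (\<forall>p\<in>set ps. palindrome p) \<and> wr_prod ps = (f, m)"
proof -
  define S where "S = {i. f i \<noteq> 0}"
  have finS: "finite S" using fin by (simp add: S_def)
  define lo where "lo = (\<lambda>i. sum f {j\<in>S. j \<le> i})"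
  define hi where "hi = (\<lambda>i. sum f {j\<in>S. i \<le> j})"
  define Tot where "Tot = sum f S"
  have l1: "lo i + hi (i + 1) = Tot" for i
  proof -
    have "sum f ({j\<in>S. j \<le> i} \<union> {j\<in>S. i + 1 \<le> j}) = lo i + hi (i + 1)"
      unfolding lo_def hi_def by (rule sum.union_disjoint) (use finS in auto)
    moreover have "{j\<in>S. j \<le> i} \<union> {j\<in>S. i + 1 \<le> j} = S" by auto
    ultimately show ?thesis by (simp add: Tot_def)
  qed
  have l2: "lo i + hi i = Tot + f i" for i
  proof -
    have "sum f ({j\<in>S. j \<le> i} \<union> {j\<in>S. i \<le> j}) + sum f ({j\<in>S. j \<le> i} \<inter> {j\<in>S. i \<le> j}) = lo i + hi i"
      unfolding lo_def hi_def by (rule sum.union_inter) (use finS in auto)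
    moreover have "{j\<in>S. j \<le> i} \<union> {j\<in>S. i \<le> j} = S" by auto
    moreover have "sum f ({j\<in>S. j \<le> i} \<inter> {j\<in>S. i \<le> j}) = f i"
    proof (cases "i \<in> S")
      case True
      then have "{j\<in>S. j \<le> i} \<inter> {j\<in>S. i \<le> j} = {i}" by auto
      then show ?thesis by simp
    next
      case False
      then have "{j\<in>S. j \<le> i} \<inter> {j\<in>S. i \<le> j} = {}" by auto
      then show ?thesis using False by (simp add: S_def)
    qed
    ultimately show ?thesis by (simp add: Tot_def)
  qed
  define K where "K = Max (insert 0 (abs ` S))"
  have Kb: "\<And>i. i \<in> S \<Longrightarrow> \<bar>i\<bar> \<le> K" unfolding K_def using finS by (intro Max_ge) auto
  have K0: "K \<ge> 0" unfolding K_def using finS by (intro Max_ge) auto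
  have lo_small: "lo i = 0" if "i < - K" for i
  proof -
    have "{j\<in>S. j \<le> i} = {}" using Kb that by force
    then show ?thesis unfolding lo_def by (simp only: sum.empty)
  qed
  have hi_big: "hi i = 0" if "i > K" for i
  proof -
    have "{j\<in>S. i \<le> j} = {}" using Kb that by force
    then show ?thesis unfolding hi_def by (simp only: sum.empty)
  qed
  have lo_big: "lo i = Tot" if "i \<ge> K" for i
  proof -
    have "{j\<in>S. j \<le> i} = S" using Kb that by force
    then show ?thesis unfolding lo_def Tot_def by (simp only:)
  qed
  have hi_small: "hi i = Tot" if "i \<le> - K" for i
  proof -
    have "{j\<in>S. i \<le> j} = S" using Kb that by force
    then show ?thesis unfolding hi_def Tot_def by (simp only:)
  qed
  define u where "u = (\<lambda>i. lo i - hi (2 - i))"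
  define v where "v = (\<lambda>i. hi i + hi (2 - i) - Tot)"
  define v' where "v' = (\<lambda>i. v (i + 1))"
  have fuv: "f i = u i + v i" for i using l2[of i] by (simp add: u_def v_def)
  have usym: "u (1 - i) = u i" for i
    using l1[of i] l1[of "1 - i"] by (simp add: u_def algebra_simps)
  have vsym: "v' (0 - i) = v' i" for i by (simp add: v'_def v_def algebra_simps)
  have usupp: "{i. u i \<noteq> 0} \<subseteq> {- K .. K + 1}"
  proof
    fix i assume "i \<in> {i. u i \<noteq> 0}"
    then have "u i \<noteq> 0" by simp
    moreover have "u i = 0" if "i < - K"
    proof -
      have "lo i = 0" using that by (rule lo_small)
      moreover have "hi (2 - i) = 0" by (rule hi_big) (use that K0 in simp)
      ultimately show ?thesis by (simp add: u_def)
    qed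
    moreover have "u i = 0" if "i > K + 1"
      using that K0 lo_big[of i] hi_small[of "2 - i"] by (simp add: u_def)
    ultimately show "i \<in> {- K .. K + 1}" by force
  qed
  have vsupp: "{i. v' i \<noteq> 0} \<subseteq> {- K - 1 .. K}"
  proof
    fix i assume "i \<in> {i. v' i \<noteq> 0}"
    then have "v' i \<noteq> 0" by simp
    moreover have "v' i = 0" if "i < - K - 1"
      using that K0 hi_small[of "i + 1"] hi_big[of "1 - i"] by (simp add: v'_def v_def)
    moreover have "v' i = 0" if "i > K"
      using that K0 hi_big[of "i + 1"] hi_small[of "1 - i"] by (simp add: v'_def v_def)
    ultimately show "i \<in> {- K - 1 .. K}" by force
  qed
  have p1: "palindrome (u, 1)"
    by (rule pal_sym) (use usupp usym in \<open>auto intro: finite_subset\<close>)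
  have p2: "palindrome (v', 0)"
    by (rule pal_sym) (use vsupp vsym in \<open>auto intro: finite_subset\<close>)
  have p3: "palindrome ((\<lambda>i. 0), m - 1)" by (rule pal_bpow)
  have "wr_prod [(u, 1), (v', 0), ((\<lambda>i. 0), m - 1)] = (f, m)"
    by (simp add: wr_prod_def wr_mult_def wr_one_def fun_eq_iff fuv v'_def)
  then show ?thesis using p1 p2 p3
    by (intro exI[of _ "[(u, 1), (v', 0), ((\<lambda>i. 0), m - 1)]"]) auto
qed

theorem corollary5p5:
  shows "pal_width \<le> 3"
  unfolding pal_width_def
proof (rule Sup_least)
  fix x assume "x \<in> pal_length ` wr_carrier"
  then obtain g where g: "g \<in> wr_carrier" and x: "x = pal_length g" by (rule imageE)
  obtain f m where gfm: "g = (f, m)" by (cases g)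
  have "finite {i. f i \<noteq> 0}" using g gfm by (simp add: wr_carrier_def)
  then obtain ps where ps: "length ps = 3" "\<forall>p\<in>set ps. palindrome p" "wr_prod ps = (f, m)"
    using three_pal by blast
  have "enat (length ps) \<in> {enat (length ps) | ps. (\<forall>p\<in>set ps. palindrome p) \<and> wr_prod ps = (f, m)}"
    using ps(2,3) by blast
  then have "pal_length (f, m) \<le> enat (length ps)" unfolding pal_length_def by (rule Inf_lower)
  then show "x \<le> 3" using x gfm ps(1) by (simp only: enat_numeral)
qed
end
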